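(* Let $n\geq 2$ and let $G\in\mathcal{G}_{2n}$. Let $M$ be a perfect matching of $G$. Then $f(G,M)=n-1$ if and only if for any two distinct edges $e_i,e_j\in M$, the induced subgraph $G[V(\{e_i,e_j\})]$ contains an $M$-alternating cycle. Consequently, $G$ has a perfect matching $M$ with $f(G,M)=n-1$ if and only if $G$ has a perfect matching $M$ with this property. Moreover, $G$ is minimal if and only if $G$ has a perfect matching $M$ such that for any two distinct edges $e_i,e_j\in M$, $G[V(\{e_i,e_j\})]$ is exactly an $M$-alternating $4$-cycle (i.e. the induced subgraph on these four vertices is a $4$-cycle alternating between $M$ and non-$M$ edges, with no further edges).
   Context: All graphs are finite and simple. $\mathcal{G}_{2n}$ denotes the set of all graphs with $2n$ vertices that have a perfect matching. For an edge set $S$, $V(S)$ is the set of end vertices of edges of $S$; $G[T]$ is the subgraph induced by a vertex set $T$. For a perfect matching $M$ of $G$, a cycle is $M$-alternating if its edges alternate between $M$ and $E(G)\setminus M$. A forcing set of $M$ is a subset $S\subseteq M$ contained in no other perfect matching of $G$; the forcing number $f(G,M)$ is the minimum size of a forcing set of $M$. The maximum forcing number $F(G)$ is the maximum of $f(G,M)$ over all perfect matchings $M$ of $G$ (so $F(G)\le n-1$ for $G\in\mathcal{G}_{2n}$). A graph $G\in\mathcal{G}_{2n}$ with $F(G)=n-1$ is called minimal if for every edge $e$ of $G$, either $G-e$ has no perfect matching or $F(G-e)\leq n-2$ (in fact the paper shows $G-e$ always has a perfect matching, so the condition is $F(G-e)\le n-2$). *)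

theory Defs
  imports Main
begin

definition simple_graph :: "'a set \<Rightarrow> 'a set set \<Rightarrow> bool" where
  "simple_graph V E \<longleftrightarrow> finite V \<and> (\<forall>e\<in>E. e \<subseteq> V \<and> card e = 2)"

definition perfect_matching :: "'a set \<Rightarrow> 'a set set \<Rightarrow> 'a set set \<Rightarrow> bool" where
  "perfect_matching V E M \<longleftrightarrow> M \<subseteq> E \<and> (\<forall>v\<in>V. \<exists>!e. e \<in> M \<and> v \<in> e)"

definition in_G2n :: "nat \<Rightarrow> 'a set \<Rightarrow> 'a set set \<Rightarrow> bool" where
  "in_G2n n V E \<longleftrightarrow> simple_graph V E \<and> card V = 2 * n \<and> (\<exists>M. perfect_matching V E M)"

definition Vs :: "'a set set \<Rightarrow> 'a set" where
  "Vs S = \<Union>S"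

definition induced :: "'a set set \<Rightarrow> 'a set \<Rightarrow> 'a set set" where
  "induced E T = {e \<in> E. e \<subseteq> T}"

definition forcing_set :: "'a set \<Rightarrow> 'a set set \<Rightarrow> 'a set set \<Rightarrow> 'a set set \<Rightarrow> bool" where
  "forcing_set V E M S \<longleftrightarrow> S \<subseteq> M \<and> (\<forall>M'. perfect_matching V E M' \<and> S \<subseteq> M' \<longrightarrow> M' = M)"

definition forcing_number :: "'a set \<Rightarrow> 'a set set \<Rightarrow> 'a set set \<Rightarrow> nat" where
  "forcing_number V E M = Min (card ` {S. forcing_set V E M S})"

definition max_forcing_number :: "'a set \<Rightarrow> 'a set set \<Rightarrow> nat" where
  "max_forcing_number V E = Max (forcing_number V E ` {M. perfect_matching V E M})"

definition cyc_edge :: "'a list \<Rightarrow> nat \<Rightarrow> 'a set" where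
  "cyc_edge cs i = {cs ! i, cs ! (Suc i mod length cs)}"

definition cycle_edges :: "'a list \<Rightarrow> 'a set set" where
  "cycle_edges cs = {cyc_edge cs i | i. i < length cs}"

definition is_cycle :: "'a set set \<Rightarrow> 'a list \<Rightarrow> bool" where
  "is_cycle E cs \<longleftrightarrow> distinct cs \<and> length cs \<ge> 3 \<and> (\<forall>i < length cs. cyc_edge cs i \<in> E)"

definition alt_cycle :: "'a set set \<Rightarrow> 'a set set \<Rightarrow> 'a list \<Rightarrow> bool" where
  "alt_cycle E M cs \<longleftrightarrow> is_cycle E cs \<and> even (length cs) \<and>
     (\<forall>i < length cs. cyc_edge cs i \<in> M \<longleftrightarrow> cyc_edge cs (Suc i mod length cs) \<notin> M)"

definition minimal_graph :: "nat \<Rightarrow> 'a set \<Rightarrow> 'a set set \<Rightarrow> bool" where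
  "minimal_graph n V E \<longleftrightarrow> max_forcing_number V E = n - 1 \<and>
     (\<forall>e\<in>E. \<not> (\<exists>M. perfect_matching V (E - {e}) M) \<or> max_forcing_number V (E - {e}) \<le> n - 2)"

end

theory Submission
  imports Defs
begin


lemma sg_edge: "simple_graph V E \<Longrightarrow> e \<in> E \<Longrightarrow> e \<subseteq> V \<and> card e = 2"
  by (simp add: simple_graph_def)

lemma pm_uniq:
  assumes sg: "simple_graph V E" and pm: "perfect_matching V E M"
    and "g \<in> M" "h \<in> M" "x \<in> g" "x \<in> h"
  shows "g = h"
proof -
  have "g \<in> E" using assms(3) pm by (auto simp: perfect_matching_def)
  then have "x \<in> V" using sg assms(5) by (auto simp: simple_graph_def)
  then show ?thesis using pm assms by (auto simp: perfect_matching_def)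
qed

lemma pm_ex:
  assumes pm: "perfect_matching V E M" and "x \<in> V"
  obtains g where "g \<in> M" "x \<in> g"
  using assms by (auto simp: perfect_matching_def)

lemma pm_edge:
  assumes sg: "simple_graph V E" and pm: "perfect_matching V E M" and "g \<in> M"
  shows "g \<in> E" "g \<subseteq> V" "card g = 2" "finite g"
  using assms by (auto simp: perfect_matching_def simple_graph_def intro: rev_finite_subset)

lemma finite_E: "simple_graph V E \<Longrightarrow> finite E"
  unfolding simple_graph_def
  by (metis Pow_iff finite_Pow_iff rev_finite_subset subsetI)

lemma pm_finite: "simple_graph V E \<Longrightarrow> perfect_matching V E M \<Longrightarrow> finite M"
  using finite_E by (metis perfect_matching_def rev_finite_subset)

lemma pm_card:
  assumes sg: "simple_graph V E" and pm: "perfect_matching V E M"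
  shows "card V = 2 * card M"
proof -
  have V: "V = \<Union>M" using pm_edge[OF sg pm] pm by (auto simp: perfect_matching_def)
  have "pairwise disjnt M"
    unfolding pairwise_def disjnt_def using pm_uniq[OF sg pm] by blast
  then have "card (\<Union>M) = sum card M"
    by (rule card_Union_disjoint) (use pm_edge[OF sg pm] in auto)
  also have "\<dots> = sum (\<lambda>_. 2) M" using pm_edge[OF sg pm] by simp
  finally show ?thesis using V by simp
qed

lemma pm_sub_eq:
  assumes sg: "simple_graph V E" and pm: "perfect_matching V E M" and pm': "perfect_matching V E M'"
    and sub: "M \<subseteq> M'"
  shows "M' = M"
proof
  show "M' \<subseteq> M"
  proof
    fix g assume g: "g \<in> M'"
    have "card g = 2" using pm_edge[OF sg pm' g] by simp
    then obtain x where x: "x \<in> g" by (metis card.empty ex_in_conv zero_neq_numeral)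
    have "x \<in> V" using pm_edge[OF sg pm' g] x by auto
    then obtain h where h: "h \<in> M" "x \<in> h" using pm_ex[OF pm] by blast
    then have "h = g" using pm_uniq[OF sg pm', of h g x] sub g x by auto
    then show "g \<in> M" using h by simp
  qed
qed (rule sub)

lemma alt4_intro:
  assumes "distinct [a,b,c,d]" "{a,b} \<in> F" "{b,c} \<in> F" "{c,d} \<in> F" "{d,a} \<in> F"
    "{a,b} \<in> M" "{b,c} \<notin> M" "{c,d} \<in> M" "{d,a} \<notin> M"
  shows "alt_cycle F M [a,b,c,d]"
proof -
  have c: "cyc_edge [a,b,c,d] 0 = {a,b}" "cyc_edge [a,b,c,d] 1 = {b,c}"
     "cyc_edge [a,b,c,d] 2 = {c,d}" "cyc_edge [a,b,c,d] 3 = {d,a}"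
    by (simp_all add: cyc_edge_def)
  have all4: "\<And>P. (\<forall>i<(4::nat). P i) = (P 0 \<and> P 1 \<and> P 2 \<and> P 3)"
    by (auto simp: eval_nat_numeral less_Suc_eq)
  have l: "length [a,b,c,d] = 4" by simp
  show ?thesis unfolding alt_cycle_def is_cycle_def l all4 c
    using assms by (simp add: cyc_edge_def insert_commute)
qed


lemma set4: "{f i |i. i < (4::nat)} = {f 0, f 1, f 2, f 3}"
proof -
  have "{i. i < (4::nat)} = {0,1,2,3}" by (auto simp: eval_nat_numeral less_Suc_eq)
  then have "{f i |i. i < (4::nat)} = f ` {0,1,2,3}" by blast
  then show ?thesis by simp
qed

lemma all4: "(\<forall>i<(4::nat). P i) = (P 0 \<and> P 1 \<and> P 2 \<and> P 3)"
  by (auto simp: eval_nat_numeral less_Suc_eq)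

lemma cycle_edges4: "cycle_edges [a,b,c,d] = {{a,b},{b,c},{c,d},{d,a}}"
proof -
  have l: "length [a,b,c,d] = 4" by simp
  show ?thesis unfolding cycle_edges_def l set4 by (simp add: cyc_edge_def)
qed

lemma alt4_iff: "alt_cycle F M [a,b,c,d] \<longleftrightarrow> distinct [a,b,c,d] \<and> {a,b} \<in> F \<and> {b,c} \<in> F \<and> {c,d} \<in> F \<and> {d,a} \<in> F
   \<and> ({a,b} \<in> M \<longleftrightarrow> {b,c} \<notin> M) \<and> ({b,c} \<in> M \<longleftrightarrow> {c,d} \<notin> M) \<and> ({c,d} \<in> M \<longleftrightarrow> {d,a} \<notin> M)
   \<and> ({d,a} \<in> M \<longleftrightarrow> {a,b} \<notin> M)"
proof -
  have l: "length [a,b,c,d] = 4" by simp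
  show ?thesis unfolding alt_cycle_def is_cycle_def l all4
    by (simp add: cyc_edge_def insert_commute)
qed

lemma len4: "length cs = 4 \<Longrightarrow> \<exists>a b c d. cs = [a,b,c,d]"
  by (simp add: eval_nat_numeral length_Suc_conv) blast

lemma Vs2: "Vs {a,b} = a \<union> b" by (simp add: Vs_def)

lemma pair_card:
  assumes sg: "simple_graph V E" and pm: "perfect_matching V E M"
    and "ei \<in> M" "ej \<in> M" "ei \<noteq> ej"
  shows "ei \<inter> ej = {}" "card (ei \<union> ej) = 4"
proof -
  show d: "ei \<inter> ej = {}" using pm_uniq[OF sg pm] assms by blast
  show "card (ei \<union> ej) = 4" using card_Un_disjoint[of ei ej] d pm_edge[OF sg pm] assms by simp
qed

lemma alt4_structure:
  assumes sg: "simple_graph V E" and pm: "perfect_matching V E M"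
    and ei: "ei \<in> M" and ej: "ej \<in> M" and ne: "ei \<noteq> ej"
    and ac: "alt_cycle (induced E (Vs {ei, ej})) M cs"
  shows "\<exists>p q r s. distinct [p,q,r,s] \<and> ei \<union> ej = {p,q,r,s} \<and> {ei,ej} = {{p,q},{r,s}}
     \<and> {p,q} \<in> M \<and> {r,s} \<in> M \<and> {q,r} \<in> E \<and> {s,p} \<in> E \<and> {q,r} \<notin> M \<and> {s,p} \<notin> M
     \<and> cycle_edges cs = {{p,q},{q,r},{r,s},{s,p}} \<and> length cs = 4"
proof -
  let ?T = "ei \<union> ej"
  have c4: "card ?T = 4" using pair_card[OF sg pm ei ej ne] by simp
  have sub: "set cs \<subseteq> ?T"
  proof
    fix x assume "x \<in> set cs"
    then obtain i where i: "i < length cs" "x = cs ! i" by (auto simp: in_set_conv_nth)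
    have "cyc_edge cs i \<in> induced E (Vs {ei, ej})" using ac i by (auto simp: alt_cycle_def is_cycle_def)
    then have "cyc_edge cs i \<subseteq> ?T" by (auto simp: induced_def Vs2)
    then show "x \<in> ?T" using i by (auto simp: cyc_edge_def)
  qed
  have dist: "distinct cs" and l3: "length cs \<ge> 3" and ev: "even (length cs)"
    using ac by (auto simp: alt_cycle_def is_cycle_def)
  have "finite ?T" using pm_edge[OF sg pm ei] pm_edge[OF sg pm ej] by simp
  then have "length cs \<le> 4" using card_mono[OF _ sub] c4 distinct_card[OF dist] by simp
  with l3 ev have l4: "length cs = 4" by presburger
  then obtain a b c d where cs: "cs = [a,b,c,d]" using len4 by blast
  have setT: "{a,b,c,d} = ?T"
    using card_subset_eq[of ?T "set cs"] sub c4 \<open>finite ?T\<close> distinct_card[OF dist] l4 cs by simp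
  have A: "distinct [a,b,c,d]" "{a,b} \<in> E" "{b,c} \<in> E" "{c,d} \<in> E" "{d,a} \<in> E"
   "({a,b} \<in> M \<longleftrightarrow> {b,c} \<notin> M)" "({b,c} \<in> M \<longleftrightarrow> {c,d} \<notin> M)" "({c,d} \<in> M \<longleftrightarrow> {d,a} \<notin> M)"
  proof -
    have ac4: "alt_cycle (induced E (Vs {ei, ej})) M [a,b,c,d]" using ac cs by simp
    note X = ac4[unfolded alt4_iff]
    have ind: "\<And>e. e \<in> induced E (Vs {ei, ej}) \<Longrightarrow> e \<in> E" by (simp add: induced_def)
    show "distinct [a,b,c,d]" using X by (elim conjE)
    show "{a,b} \<in> E" using X ind by (elim conjE)
    show "{b,c} \<in> E" using X ind by (elim conjE)
    show "{c,d} \<in> E" using X ind by (elim conjE)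
    show "{d,a} \<in> E" using X ind by (elim conjE)
    show "({a,b} \<in> M \<longleftrightarrow> {b,c} \<notin> M)" using X by (elim conjE)
    show "({b,c} \<in> M \<longleftrightarrow> {c,d} \<notin> M)" using X by (elim conjE)
    show "({c,d} \<in> M \<longleftrightarrow> {d,a} \<notin> M)" using X by (elim conjE)
  qed
  have inM: "g \<in> M \<Longrightarrow> x \<in> g \<Longrightarrow> x \<in> ?T \<Longrightarrow> g = ei \<or> g = ej" for g x
    using pm_uniq[OF sg pm] ei ej by blast
  show ?thesis
  proof (cases "{a,b} \<in> M")
    case True
    then have M2: "{c,d} \<in> M" "{b,c} \<notin> M" "{d,a} \<notin> M" using A by auto
    have "{a,b} = ei \<or> {a,b} = ej" using inM[OF True, of a] setT by auto
    moreover have "{c,d} = ei \<or> {c,d} = ej" using inM[OF M2(1), of c] setT by auto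
    moreover have "{a,b} \<noteq> {c,d}" using A(1) by (auto simp: doubleton_eq_iff)
    ultimately have "{ei,ej} = {{a,b},{c,d}}" using ne by blast
    then show ?thesis using A True M2 setT l4 unfolding cs cycle_edges4
      by (intro exI[of _ a] exI[of _ b] exI[of _ c] exI[of _ d]) simp
  next
    case False
    then have M2: "{b,c} \<in> M" "{d,a} \<in> M" "{c,d} \<notin> M" using A by auto
    have "{b,c} = ei \<or> {b,c} = ej" using inM[OF M2(1), of b] setT by auto
    moreover have "{d,a} = ei \<or> {d,a} = ej" using inM[OF M2(2), of d] setT by auto
    moreover have "{b,c} \<noteq> {d,a}" using A(1) by (auto simp: doubleton_eq_iff)
    ultimately have "{ei,ej} = {{b,c},{d,a}}" using ne by blast
    note E2 = this
    have T2: "?T = {b,c,d,a}" using setT by blast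
    have C2: "cycle_edges cs = {{b,c},{c,d},{d,a},{a,b}}" unfolding cs cycle_edges4 by blast
    have D2: "distinct [b,c,d,a]" using A(1) by auto
    show ?thesis
      apply (rule exI[of _ b], rule exI[of _ c], rule exI[of _ d], rule exI[of _ a])
      using D2 T2 E2 M2 A(4) A(2) False C2 l4 by (intro conjI) assumption+
  qed
qed

lemma swap4:
  assumes sg: "simple_graph V E" and pm: "perfect_matching V E M"
    and d: "distinct [p,q,r,s]" and m: "{p,q} \<in> M" "{r,s} \<in> M" and e: "{q,r} \<in> E" "{s,p} \<in> E"
  shows "perfect_matching V E ((M - {{p,q},{r,s}}) \<union> {{q,r},{s,p}})"
proof -
  let ?M = "(M - {{p,q},{r,s}}) \<union> {{q,r},{s,p}}"
  have u: "\<And>g x. g \<in> M \<Longrightarrow> x \<in> g \<Longrightarrow> x \<in> {p,q} \<Longrightarrow> g = {p,q}"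
    using pm_uniq[OF sg pm] m by blast
  have u2: "\<And>g x. g \<in> M \<Longrightarrow> x \<in> g \<Longrightarrow> x \<in> {r,s} \<Longrightarrow> g = {r,s}"
    using pm_uniq[OF sg pm] m by blast
  have sub: "?M \<subseteq> E" using pm e by (auto simp: perfect_matching_def)
  have "\<exists>!g. g \<in> ?M \<and> v \<in> g" if v: "v \<in> V" for v
  proof (cases "v \<in> {p,q,r,s}")
    case True
    then show ?thesis
    proof (elim insertE)
      assume "v = p" then show ?thesis using d u[of _ p] u2[of _ p] by (intro ex1I[of _ "{s,p}"]) auto
    next
      assume "v = q" then show ?thesis using d u[of _ q] u2[of _ q] by (intro ex1I[of _ "{q,r}"]) auto
    next
      assume "v = r" then show ?thesis using d u[of _ r] u2[of _ r] by (intro ex1I[of _ "{q,r}"]) auto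
    next
      assume "v \<in> {}" then show ?thesis by simp
    next
      assume "v = s" then show ?thesis using d u[of _ s] u2[of _ s] by (intro ex1I[of _ "{s,p}"]) auto
    qed
  next
    case False
    obtain g where g: "g \<in> M" "v \<in> g" using pm_ex[OF pm v] by blast
    have "g \<noteq> {p,q}" "g \<noteq> {r,s}" using g False by auto
    show ?thesis
    proof (rule ex1I[of _ g])
      show "g \<in> ?M \<and> v \<in> g" using g \<open>g \<noteq> {p,q}\<close> \<open>g \<noteq> {r,s}\<close> by simp
    next
      fix h assume h: "h \<in> ?M \<and> v \<in> h"
      then have "h \<in> M" using False by auto
      then show "h = g" using pm_uniq[OF sg pm, of h g v] g h by simp
    qed
  qed
  then show ?thesis using sub by (simp add: perfect_matching_def)
qed


definition pairprop :: "'a set set \<Rightarrow> 'a set set \<Rightarrow> bool" where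
  "pairprop E M \<longleftrightarrow> (\<forall>ei\<in>M. \<forall>ej\<in>M. ei \<noteq> ej \<longrightarrow> (\<exists>cs. alt_cycle (induced E (Vs {ei, ej})) M cs))"

lemma card2_pick: "card g = 2 \<Longrightarrow> a \<in> g \<Longrightarrow> \<exists>y. y \<noteq> a \<and> g = {a,y}"
  by (auto simp: card_2_iff)

lemma forcing_finite:
  assumes sg: "simple_graph V E" and pm: "perfect_matching V E M"
  shows "finite {S. forcing_set V E M S}" "M \<in> {S. forcing_set V E M S}"
proof -
  have "{S. forcing_set V E M S} \<subseteq> Pow M" by (auto simp: forcing_set_def)
  then show "finite {S. forcing_set V E M S}" using pm_finite[OF sg pm] by (meson finite_Pow_iff rev_finite_subset)
  show "M \<in> {S. forcing_set V E M S}"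
    using pm_sub_eq[OF sg pm] by (auto simp: forcing_set_def)
qed

lemma fn_le_card:
  assumes sg: "simple_graph V E" and pm: "perfect_matching V E M" and f: "forcing_set V E M S"
  shows "forcing_number V E M \<le> card S"
  unfolding forcing_number_def using forcing_finite[OF sg pm] f by (intro Min_le) auto

lemma fn_ge:
  assumes sg: "simple_graph V E" and pm: "perfect_matching V E M"
    and all: "\<And>S. forcing_set V E M S \<Longrightarrow> k \<le> card S"
  shows "k \<le> forcing_number V E M"
proof -
  have "forcing_number V E M \<in> card ` {S. forcing_set V E M S}"
    unfolding forcing_number_def using forcing_finite[OF sg pm] by (intro Min_in) auto
  then show ?thesis using all by auto
qed

lemma closed:
  assumes sg: "simple_graph V E" and pm: "perfect_matching V E M" and pm': "perfect_matching V E M'"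
    and X: "X \<subseteq> M" and sub: "M - X \<subseteq> M'" and g: "g \<in> M'" and x: "x \<in> g" "x \<in> \<Union>X"
  shows "g \<subseteq> \<Union>X"
proof
  fix y assume y: "y \<in> g"
  have "y \<in> V" using pm_edge[OF sg pm' g] y by auto
  then obtain h where h: "h \<in> M" "y \<in> h" using pm_ex[OF pm] by blast
  show "y \<in> \<Union>X"
  proof (rule ccontr)
    assume "y \<notin> \<Union>X"
    then have "h \<notin> X" using h by auto
    then have "h \<in> M'" using sub h by auto
    then have "h = g" using pm_uniq[OF sg pm' _ g] h y by blast
    obtain e where e: "e \<in> X" "x \<in> e" using x by auto
    then have "g = e" using pm_uniq[OF sg pm, of g e x] \<open>h = g\<close> h X x by auto
    then show False using \<open>h \<notin> X\<close> \<open>h = g\<close> e by simp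
  qed
qed

lemma fn_le_n1:
  assumes sg: "simple_graph V E" and pm: "perfect_matching V E M" and cM: "card M = n" and n: "n \<ge> 1"
  shows "forcing_number V E M \<le> n - 1"
proof -
  have "M \<noteq> {}" using cM n by auto
  then obtain e0 where e0: "e0 \<in> M" by blast
  have fs: "forcing_set V E M (M - {e0})"
    unfolding forcing_set_def
  proof (intro conjI allI impI)
    fix M' assume a: "perfect_matching V E M' \<and> M - {e0} \<subseteq> M'"
    then have pm': "perfect_matching V E M'" and sub: "M - {e0} \<subseteq> M'" by auto
    obtain x where x: "x \<in> e0" using pm_edge(3)[OF sg pm e0] by (auto simp: card_2_iff)
    have "x \<in> V" using pm_edge[OF sg pm e0] x by auto
    then obtain g where g: "g \<in> M'" "x \<in> g" using pm_ex[OF pm'] by blast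
    have "g \<subseteq> \<Union>{e0}" using e0 sub g x by (intro closed[OF sg pm pm', of "{e0}" g x]) auto
    then have "g \<subseteq> e0" by simp
    then have "g = e0" using card_subset_eq[of e0 g] pm_edge(3,4)[OF sg pm' g(1)] pm_edge(3,4)[OF sg pm e0] by simp
    then have "M \<subseteq> M'" using sub g by auto
    then show "M' = M" using pm_sub_eq[OF sg pm pm'] by simp
  qed auto
  have "card (M - {e0}) = n - 1" using cM e0 pm_finite[OF sg pm] by simp
  then show ?thesis using fn_le_card[OF sg pm fs] by simp
qed

lemma no_alt_forcing:
  assumes sg: "simple_graph V E" and pm: "perfect_matching V E M"
    and ei: "ei \<in> M" and ej: "ej \<in> M" and ne: "ei \<noteq> ej"
    and na: "\<not> (\<exists>cs. alt_cycle (induced E (Vs {ei, ej})) M cs)"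
  shows "forcing_set V E M (M - {ei, ej})"
  unfolding forcing_set_def
proof (intro conjI allI impI)
  fix M' assume a: "perfect_matching V E M' \<and> M - {ei, ej} \<subseteq> M'"
  then have pm': "perfect_matching V E M'" and sub: "M - {ei,ej} \<subseteq> M'" by auto
  obtain a b where ab: "a \<noteq> b" "ei = {a,b}" using pm_edge[OF sg pm ei] by (auto simp: card_2_iff)
  obtain c d where cd: "c \<noteq> d" "ej = {c,d}" using pm_edge[OF sg pm ej] by (auto simp: card_2_iff)
  have dj: "ei \<inter> ej = {}" using pair_card[OF sg pm ei ej ne] by simp
  have dist: "distinct [a,b,c,d]" using ab cd dj by auto
  let ?T = "{a,b,c,d}"
  have UX: "\<Union>{ei,ej} = ?T" using ab cd by auto
  have XM: "{ei,ej} \<subseteq> M" using ei ej by auto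
  have cl: "g \<subseteq> ?T" if "g \<in> M'" "x \<in> g" "x \<in> ?T" for g x
  proof -
    have "x \<in> \<Union>{ei,ej}" using that(3) UX by simp
    from closed[OF sg pm pm' XM sub that(1,2) this] show ?thesis using UX by simp
  qed
  have inV: "\<And>x. x \<in> ?T \<Longrightarrow> x \<in> V" using pm_edge[OF sg pm ei] pm_edge[OF sg pm ej] ab cd by auto
  have getg: "\<exists>y. y \<in> ?T \<and> y \<noteq> x \<and> {x,y} \<in> M'" if xT: "x \<in> ?T" for x
  proof -
    obtain g where g: "g \<in> M'" "x \<in> g" using pm_ex[OF pm'] inV[OF xT] by blast
    obtain y where y: "y \<noteq> x" "g = {x,y}" using card2_pick[OF pm_edge(3)[OF sg pm' g(1)] g(2)] by blast
    have "y \<in> ?T" using cl[OF g xT] y(2) by blast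
    then show ?thesis using y g by blast
  qed
  have u': "\<And>g h x. g \<in> M' \<Longrightarrow> h \<in> M' \<Longrightarrow> x \<in> g \<Longrightarrow> x \<in> h \<Longrightarrow> g = h"
    using pm_uniq[OF sg pm'] by blast
  have u: "\<And>g h x. g \<in> M \<Longrightarrow> h \<in> M \<Longrightarrow> x \<in> g \<Longrightarrow> x \<in> h \<Longrightarrow> g = h"
    using pm_uniq[OF sg pm] by blast
  have indE: "\<And>g. g \<in> E \<Longrightarrow> g \<subseteq> ?T \<Longrightarrow> g \<in> induced E (Vs {ei, ej})"
    using UX by (simp add: induced_def Vs_def)
  have M'E: "\<And>g. g \<in> M' \<Longrightarrow> g \<in> E" using pm' by (auto simp: perfect_matching_def)
  have ME: "\<And>g. g \<in> M \<Longrightarrow> g \<in> E" using pm by (auto simp: perfect_matching_def)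
  obtain y where y: "y \<in> ?T" "y \<noteq> a" "{a,y} \<in> M'" using getg[of a] by auto
  have both: "ei \<in> M' \<and> ej \<in> M'"
  proof -
    consider "y = b" | "y = c" | "y = d" using y by auto
    then show ?thesis
    proof cases
      case 1
      then have "ei \<in> M'" using y ab by simp
      obtain z where z: "z \<in> ?T" "z \<noteq> c" "{c,z} \<in> M'" using getg[of c] by auto
      have "z \<noteq> a" using u'[OF z(3) \<open>ei \<in> M'\<close>, of a] ab dist by auto
      moreover have "z \<noteq> b" using u'[OF z(3) \<open>ei \<in> M'\<close>, of b] ab dist by auto
      ultimately have "z = d" using z by auto
      then show ?thesis using z cd \<open>ei \<in> M'\<close> by simp
    next
      case 2
      obtain z where z: "z \<in> ?T" "z \<noteq> b" "{b,z} \<in> M'" using getg[of b] by auto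
      have "z \<noteq> a" using u'[OF z(3) y(3), of a] 2 dist by auto
      moreover have "z \<noteq> c" using u'[OF z(3) y(3), of c] 2 dist by auto
      ultimately have zd: "z = d" using z by auto
      have n1: "{d,b} \<notin> M" using u[of "{d,b}" ei b] ei ab dist by auto
      have n2: "{a,c} \<notin> M" using u[of "{a,c}" ei a] ei ab dist by auto
      have e1: "{d,b} \<in> E" using M'E[OF z(3)] zd by (simp add: insert_commute)
      have e2: "{a,c} \<in> E" using M'E[OF y(3)] 2 by simp
      have "alt_cycle (induced E (Vs {ei, ej})) M [c,d,b,a]"
      proof (intro alt4_intro indE)
        show "distinct [c,d,b,a]" using dist by auto
        show "{c,d} \<in> M" using ej cd by (simp add: insert_commute)
        show "{b,a} \<in> M" using ei ab by (simp add: insert_commute)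
        show "{c,d} \<in> E" using ME[OF ej] cd by (simp add: insert_commute)
        show "{b,a} \<in> E" using ME[OF ei] ab by (simp add: insert_commute)
      qed (use n1 n2 e1 e2 in \<open>auto simp: insert_commute\<close>)
      then show ?thesis using na by blast
    next
      case 3
      obtain z where z: "z \<in> ?T" "z \<noteq> b" "{b,z} \<in> M'" using getg[of b] by auto
      have "z \<noteq> a" using u'[OF z(3) y(3), of a] 3 dist by auto
      moreover have "z \<noteq> d" using u'[OF z(3) y(3), of d] 3 dist by auto
      ultimately have zc: "z = c" using z by auto
      have n1: "{c,b} \<notin> M" using u[of "{c,b}" ei b] ei ab dist by auto
      have n2: "{a,d} \<notin> M" using u[of "{a,d}" ei a] ei ab dist by auto
      have e1: "{c,b} \<in> E" using M'E[OF z(3)] zc by (simp add: insert_commute)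
      have e2: "{a,d} \<in> E" using M'E[OF y(3)] 3 by simp
      have "alt_cycle (induced E (Vs {ei, ej})) M [d,c,b,a]"
      proof (intro alt4_intro indE)
        show "distinct [d,c,b,a]" using dist by auto
        show "{d,c} \<in> M" using ej cd by (simp add: insert_commute)
        show "{b,a} \<in> M" using ei ab by (simp add: insert_commute)
        show "{d,c} \<in> E" using ME[OF ej] cd by (simp add: insert_commute)
        show "{b,a} \<in> E" using ME[OF ei] ab by (simp add: insert_commute)
      qed (use n1 n2 e1 e2 in \<open>auto simp: insert_commute\<close>)
      then show ?thesis using na by blast
    qed
  qed
  then have "M \<subseteq> M'" using sub by auto
  then show "M' = M" using pm_sub_eq[OF sg pm pm'] by simp
qed auto


lemma pairprop_forcing_ge:
  assumes sg: "simple_graph V E" and pm: "perfect_matching V E M" and cM: "card M = n"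
    and pp: "pairprop E M" and fs: "forcing_set V E M S"
  shows "n - 1 \<le> card S"
proof (rule ccontr)
  assume "\<not> n - 1 \<le> card S"
  then have lt: "card S + 2 \<le> n" by simp
  have SM: "S \<subseteq> M" using fs by (simp add: forcing_set_def)
  have fin: "finite M" using pm_finite[OF sg pm] .
  have "card (M - S) = n - card S" using card_Diff_subset[OF rev_finite_subset[OF fin SM] SM] cM by simp
  then have c2: "card (M - S) \<ge> 2" using lt by simp
  then have "M - S \<noteq> {}" by (intro notI) simp
  then obtain ei where ei: "ei \<in> M - S" by blast
  have "card (M - S - {ei}) \<ge> 1" using c2 ei fin by simp
  then have "M - S - {ei} \<noteq> {}" by (intro notI) simp
  then obtain ej where ej: "ej \<in> M - S" "ej \<noteq> ei" by blast
  obtain cs where cs: "alt_cycle (induced E (Vs {ei, ej})) M cs"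
    using pp ei ej unfolding pairprop_def by blast
  have eiM: "ei \<in> M" and ejM: "ej \<in> M" and ne: "ei \<noteq> ej" using ei ej by auto
  obtain p q r s where PP: "distinct [p,q,r,s] \<and> ei \<union> ej = {p,q,r,s} \<and> {ei,ej} = {{p,q},{r,s}}
     \<and> {p,q} \<in> M \<and> {r,s} \<in> M \<and> {q,r} \<in> E \<and> {s,p} \<in> E \<and> {q,r} \<notin> M \<and> {s,p} \<notin> M
     \<and> cycle_edges cs = {{p,q},{q,r},{r,s},{s,p}} \<and> length cs = 4"
    using alt4_structure[OF sg pm eiM ejM ne cs] by (elim exE) (erule that)
  have P1: "distinct [p,q,r,s]" using PP by (elim conjE)
  have P2: "{ei,ej} = {{p,q},{r,s}}" using PP by (elim conjE)
  have P3: "{p,q} \<in> M" using PP by (elim conjE)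
  have P4: "{r,s} \<in> M" using PP by (elim conjE)
  have P5: "{q,r} \<in> E" using PP by (elim conjE)
  have P6: "{s,p} \<in> E" using PP by (elim conjE)
  have P7: "{q,r} \<notin> M" using PP by (elim conjE)
  note P = P1 P2 P3 P4 P5 P6 P7
  let ?M = "(M - {{p,q},{r,s}}) \<union> {{q,r},{s,p}}"
  have pm': "perfect_matching V E ?M" using swap4[OF sg pm P(1,3,4,5,6)] .
  have i1: "{p,q} \<in> {ei,ej}" using P(2) by (metis insertI1)
  have i2: "{r,s} \<in> {ei,ej}" using P(2) by (metis insertI1 insertI2)
  have nS: "\<And>x. x \<in> {ei,ej} \<Longrightarrow> x \<notin> S" using ei ej by (metis DiffD2 empty_iff insertE)
  have "{p,q} \<notin> S" "{r,s} \<notin> S" using nS[OF i1] nS[OF i2] .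
  then have "S \<subseteq> ?M" using SM by blast
  note SS = this
  have fa: "\<forall>M'. perfect_matching V E M' \<and> S \<subseteq> M' \<longrightarrow> M' = M" using fs unfolding forcing_set_def by blast
  have eqM: "?M = M" using spec[OF fa, of ?M] pm' SS by blast
  have "{q,r} \<in> ?M" by blast
  then have "{q,r} \<in> M" unfolding eqM .
  then show False using P(7) by contradiction
qed

lemma part1:
  assumes sg: "simple_graph V E" and cV: "card V = 2 * n" and n2: "n \<ge> 2"
    and pm: "perfect_matching V E M"
  shows "forcing_number V E M = n - 1 \<longleftrightarrow> pairprop E M"
proof -
  have cM: "card M = n" using pm_card[OF sg pm] cV by simp
  show ?thesis
  proof
    assume pp: "pairprop E M"
    have "n - 1 \<le> forcing_number V E M"
      using fn_ge[OF sg pm] pairprop_forcing_ge[OF sg pm cM pp] by blast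
    moreover have "forcing_number V E M \<le> n - 1" using fn_le_n1[OF sg pm cM] n2 by simp
    ultimately show "forcing_number V E M = n - 1" by simp
  next
    assume f: "forcing_number V E M = n - 1"
    show "pairprop E M"
    proof (rule ccontr)
      assume "\<not> pairprop E M"
      then obtain ei ej where e: "ei \<in> M" "ej \<in> M" "ei \<noteq> ej"
        and na: "\<not> (\<exists>cs. alt_cycle (induced E (Vs {ei, ej})) M cs)"
        unfolding pairprop_def by blast
      have fs: "forcing_set V E M (M - {ei,ej})" using no_alt_forcing[OF sg pm e na] .
      have "card {ei,ej} = 2" using e(3) by simp
      then have "card (M - {ei,ej}) = n - 2" using e cM card_Diff_subset[of "{ei,ej}" M] by simp
      then have "forcing_number V E M \<le> n - 2" using fn_le_card[OF sg pm fs] by simp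
      then show False using f n2 by simp
    qed
  qed
qed



lemma edge_meets:
  assumes sg: "simple_graph V E" and pm: "perfect_matching V E M"
    and g: "g \<in> E" "g \<notin> M" and ei: "ei \<in> M" and ej: "ej \<in> M" and sub: "g \<subseteq> ei \<union> ej"
  shows "g \<inter> ei \<noteq> {}"
proof
  assume "g \<inter> ei = {}"
  then have "g \<subseteq> ej" using sub by blast
  moreover have "card g = 2" "finite ej" "card ej = 2" using sg g pm_edge[OF sg pm ej] by (auto simp: simple_graph_def)
  ultimately have "g = ej" using card_subset_eq by metis
  then show False using g ej by simp
qed

lemma edge_pair_unique:
  assumes sg: "simple_graph V E" and pm: "perfect_matching V E M"
    and g: "g \<in> E" "g \<notin> M" and ei: "ei \<in> M" and ej: "ej \<in> M" and ek: "ek \<in> M" and el: "el \<in> M"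
    and ne: "ei \<noteq> ej" "ek \<noteq> el"
    and s1: "g \<subseteq> ei \<union> ej" and s2: "g \<subseteq> ek \<union> el"
  shows "{ei,ej} = {ek,el}"
proof -
  have m: "e \<in> {ek,el}" if e: "e \<in> M" "g \<inter> e \<noteq> {}" for e
  proof -
    obtain x where x: "x \<in> g" "x \<in> e" using e(2) by blast
    then have "x \<in> ek \<or> x \<in> el" using s2 by blast
    then show ?thesis using pm_uniq[OF sg pm] e(1) ek el x(2) by blast
  qed
  have a: "ei \<in> {ek,el}" using m[OF ei edge_meets[OF sg pm g ei ej s1]] .
  have b: "ej \<in> {ek,el}" using m[OF ej edge_meets[OF sg pm g ej ei]] s1 by blast
  show ?thesis using a b ne by blast
qed

lemma pairs_card:
  assumes "finite M" "card M = n"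
  shows "2 * card {p. p \<subseteq> M \<and> card p = 2} = n * (n - 1)"
proof -
  have "card {p. p \<subseteq> M \<and> card p = 2} = n choose 2" using n_subsets[OF assms(1)] assms(2) by simp
  moreover have "2 * (n choose 2) = n * (n - 1)"
    by (simp add: choose_two) (cases n, auto)
  ultimately show ?thesis by simp
qed

lemma pairs_obtain: "p \<in> {p. p \<subseteq> M \<and> card p = 2} \<Longrightarrow> \<exists>ei ej. p = {ei,ej} \<and> ei \<in> M \<and> ej \<in> M \<and> ei \<noteq> ej"
  by (auto simp: card_2_iff)

lemma count_lower:
  assumes sg: "simple_graph V E" and pm: "perfect_matching V E M" and cM: "card M = n"
    and pp: "pairprop E M"
  shows "n * n \<le> card E"
proof -
  let ?P = "{p. p \<subseteq> M \<and> card p = 2}"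
  define D where "D p = induced E (Vs p) - M" for p
  have finM: "finite M" using pm_finite[OF sg pm] .
  have finE: "finite E" using finite_E[OF sg] .
  have finP: "finite ?P" using finM by simp
  have D2: "2 \<le> card (D p)" if p: "p \<in> ?P" for p
  proof -
    obtain ei ej where e: "p = {ei,ej}" "ei \<in> M" "ej \<in> M" "ei \<noteq> ej" using pairs_obtain[OF p] by blast
    obtain cs where cs: "alt_cycle (induced E (Vs {ei, ej})) M cs" using pp e unfolding pairprop_def by blast
    obtain a b c d where PP: "distinct [a,b,c,d] \<and> ei \<union> ej = {a,b,c,d} \<and> {ei,ej} = {{a,b},{c,d}}
     \<and> {a,b} \<in> M \<and> {c,d} \<in> M \<and> {b,c} \<in> E \<and> {d,a} \<in> E \<and> {b,c} \<notin> M \<and> {d,a} \<notin> M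
     \<and> cycle_edges cs = {{a,b},{b,c},{c,d},{d,a}} \<and> length cs = 4"
      using alt4_structure[OF sg pm e(2,3,4) cs] by (elim exE) (erule that)
    have T: "ei \<union> ej = {a,b,c,d}" using PP by (elim conjE)
    have d: "distinct [a,b,c,d]" using PP by (elim conjE)
    have h1: "{b,c} \<in> E" using PP by (elim conjE)
    have h2: "{d,a} \<in> E" using PP by (elim conjE)
    have h3: "{b,c} \<notin> M" using PP by (elim conjE)
    have h4: "{d,a} \<notin> M" using PP by (elim conjE)
    have VT: "Vs p = {a,b,c,d}" using T e(1) by (simp add: Vs2)
    have "{b,c} \<subseteq> {a,b,c,d}" "{d,a} \<subseteq> {a,b,c,d}" by auto
    then have sub: "{{b,c},{d,a}} \<subseteq> D p" unfolding D_def induced_def VT using h1 h2 h3 h4 by blast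
    have "card {{b,c},{d,a}} = 2" using d by (auto simp: doubleton_eq_iff)
    moreover have "finite (D p)" unfolding D_def induced_def using finE by simp
    ultimately show ?thesis using card_mono[OF _ sub] by simp
  qed
  have disj: "D p1 \<inter> D p2 = {}" if p: "p1 \<in> ?P" "p2 \<in> ?P" "p1 \<noteq> p2" for p1 p2
  proof (rule ccontr)
    assume "D p1 \<inter> D p2 \<noteq> {}"
    then obtain g where g: "g \<in> D p1" "g \<in> D p2" by blast
    obtain ei ej where e: "p1 = {ei,ej}" "ei \<in> M" "ej \<in> M" "ei \<noteq> ej" using pairs_obtain[OF p(1)] by blast
    obtain ek el where e2: "p2 = {ek,el}" "ek \<in> M" "el \<in> M" "ek \<noteq> el" using pairs_obtain[OF p(2)] by blast
    have "g \<in> E" "g \<notin> M" "g \<subseteq> ei \<union> ej" "g \<subseteq> ek \<union> el"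
      using g unfolding D_def induced_def e(1) e2(1) Vs2 by auto
    then have "{ei,ej} = {ek,el}" using edge_pair_unique[OF sg pm _ _ e(2,3) e2(2,3) e(4) e2(4)] by blast
    then show False using p(3) e(1) e2(1) by simp
  qed
  have "card (\<Union>(D ` ?P)) = (\<Sum>p\<in>?P. card (D p))"
    by (rule card_UN_disjoint) (use finP disj in \<open>auto simp: D_def induced_def intro: rev_finite_subset[OF finE]\<close>)
  moreover have "card ?P * 2 \<le> (\<Sum>p\<in>?P. card (D p))" using sum_bounded_below[of ?P 2 "\<lambda>p. card (D p)"] D2 by simp
  moreover have "\<Union>(D ` ?P) \<subseteq> E - M" unfolding D_def induced_def by auto
  then have "card (\<Union>(D ` ?P)) \<le> card (E - M)" using finE by (intro card_mono) auto
  moreover have "card (E - M) = card E - n"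
    using card_Diff_subset[OF finM] pm cM by (simp add: perfect_matching_def)
  moreover have "card M \<le> card E" using pm finE by (intro card_mono) (auto simp: perfect_matching_def)
  moreover have "2 * card ?P = n * (n - 1)" using pairs_card[OF finM cM] .
  moreover have "n * (n - 1) + n = n * n" by (cases n) auto
  ultimately show ?thesis using cM by linarith
qed

definition exactprop :: "'a set set \<Rightarrow> 'a set set \<Rightarrow> bool" where
  "exactprop E M \<longleftrightarrow> (\<forall>ei\<in>M. \<forall>ej\<in>M. ei \<noteq> ej \<longrightarrow>
     (\<exists>cs. alt_cycle (induced E (Vs {ei, ej})) M cs \<and> length cs = 4 \<and> induced E (Vs {ei, ej}) = cycle_edges cs))"

lemma count_upper:
  assumes sg: "simple_graph V E" and pm: "perfect_matching V E M" and cM: "card M = n"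
    and ex: "exactprop E M"
  shows "card E \<le> n * n"
proof -
  let ?P = "{p. p \<subseteq> M \<and> card p = 2}"
  define D where "D p = induced E (Vs p) - M" for p
  have finM: "finite M" using pm_finite[OF sg pm] .
  have finE: "finite E" using finite_E[OF sg] .
  have finP: "finite ?P" using finM by simp
  have D2: "card (D p) \<le> 2" if p: "p \<in> ?P" for p
  proof -
    obtain ei ej where e: "p = {ei,ej}" "ei \<in> M" "ej \<in> M" "ei \<noteq> ej" using pairs_obtain[OF p] by blast
    obtain cs where cs: "alt_cycle (induced E (Vs {ei, ej})) M cs" and ind: "induced E (Vs {ei, ej}) = cycle_edges cs"
      using ex e unfolding exactprop_def by blast
    obtain a b c d where PP: "distinct [a,b,c,d] \<and> ei \<union> ej = {a,b,c,d} \<and> {ei,ej} = {{a,b},{c,d}}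
     \<and> {a,b} \<in> M \<and> {c,d} \<in> M \<and> {b,c} \<in> E \<and> {d,a} \<in> E \<and> {b,c} \<notin> M \<and> {d,a} \<notin> M
     \<and> cycle_edges cs = {{a,b},{b,c},{c,d},{d,a}} \<and> length cs = 4"
      using alt4_structure[OF sg pm e(2,3,4) cs] by (elim exE) (erule that)
    have C: "cycle_edges cs = {{a,b},{b,c},{c,d},{d,a}}" using PP by (elim conjE)
    have h1: "{a,b} \<in> M" using PP by (elim conjE)
    have h2: "{c,d} \<in> M" using PP by (elim conjE)
    have "D p \<subseteq> {{b,c},{d,a}}" unfolding D_def e ind C using h1 h2 by blast
    then have "card (D p) \<le> card {{b,c},{d,a}}" by (intro card_mono) auto
    moreover have "card {{b,c},{d,a}} \<le> 2" by (simp add: card_insert_if)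
    ultimately show ?thesis by linarith
  qed
  have cover: "E \<subseteq> M \<union> \<Union>(D ` ?P)"
  proof
    fix g assume g: "g \<in> E"
    show "g \<in> M \<union> \<Union>(D ` ?P)"
    proof (cases "g \<in> M")
      case False
      obtain x y where xy: "g = {x,y}" "x \<noteq> y" using sg g by (auto simp: simple_graph_def card_2_iff)
      have xV: "x \<in> V" and yV: "y \<in> V" using sg g xy by (auto simp: simple_graph_def)
      obtain ex where ex: "ex \<in> M" "x \<in> ex" using pm_ex[OF pm xV] by blast
      obtain ey where ey: "ey \<in> M" "y \<in> ey" using pm_ex[OF pm yV] by blast
      have "ex \<noteq> ey"
      proof
        assume "ex = ey"
        then have "g \<subseteq> ex" using ex ey xy by auto
        moreover have "card g = 2" "finite ex" "card ex = 2" using sg g pm_edge[OF sg pm ex(1)] by (auto simp: simple_graph_def)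
        ultimately have "g = ex" using card_subset_eq by metis
        then show False using False ex by simp
      qed
      then have "{ex,ey} \<in> ?P" using ex ey by auto
      moreover have "g \<in> D {ex,ey}" unfolding D_def induced_def Vs2 using g False xy ex ey by auto
      ultimately show ?thesis by blast
    qed simp
  qed
  have "card E \<le> card (M \<union> \<Union>(D ` ?P))" using cover finM finP
    by (intro card_mono) (auto simp: D_def induced_def intro: rev_finite_subset[OF finE])
  also have "\<dots> \<le> card M + card (\<Union>(D ` ?P))" by (rule card_Un_le)
  also have "card (\<Union>(D ` ?P)) \<le> (\<Sum>p\<in>?P. card (D p))" using card_UN_le[OF finP] by simp
  also have "(\<Sum>p\<in>?P. card (D p)) \<le> card ?P * 2" using sum_bounded_above[of ?P "\<lambda>p. card (D p)" 2] D2 by simp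
  finally have "card E \<le> n + card ?P * 2" using cM by simp
  moreover have "2 * card ?P = n * (n - 1)" using pairs_card[OF finM cM] .
  moreover have "n * (n - 1) + n = n * n" by (cases n) auto
  ultimately show ?thesis by linarith
qed



lemma pm_set_finite:
  assumes sg: "simple_graph V E" shows "finite {M. perfect_matching V E M}"
proof -
  have "{M. perfect_matching V E M} \<subseteq> Pow E" by (auto simp: perfect_matching_def)
  then show ?thesis using finite_E[OF sg] by (meson finite_Pow_iff rev_finite_subset)
qed

lemma maxF_ge:
  assumes sg: "simple_graph V E" and pm: "perfect_matching V E M"
  shows "forcing_number V E M \<le> max_forcing_number V E"
  unfolding max_forcing_number_def using pm_set_finite[OF sg] pm by (intro Max_ge) auto

lemma maxF_attained:
  assumes sg: "simple_graph V E" and pm: "perfect_matching V E M"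
  shows "\<exists>M'. perfect_matching V E M' \<and> forcing_number V E M' = max_forcing_number V E"
proof -
  have "max_forcing_number V E \<in> forcing_number V E ` {M. perfect_matching V E M}"
    unfolding max_forcing_number_def using pm_set_finite[OF sg] pm by (intro Max_in) auto
  then show ?thesis by auto
qed

lemma maxF_le:
  assumes sg: "simple_graph V E" and pm: "perfect_matching V E M"
    and all: "\<And>M'. perfect_matching V E M' \<Longrightarrow> forcing_number V E M' \<le> k"
  shows "max_forcing_number V E \<le> k"
proof -
  obtain M' where "perfect_matching V E M'" "forcing_number V E M' = max_forcing_number V E"
    using maxF_attained[OF sg pm] by blast
  then show ?thesis using all by metis
qed

lemma sg_del: "simple_graph V E \<Longrightarrow> simple_graph V (E - {e})"
  by (simp add: simple_graph_def)

lemma pm_del: "perfect_matching V (E - {e}) M \<Longrightarrow> perfect_matching V E M"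
  by (auto simp: perfect_matching_def)

lemma pm_del2: "perfect_matching V E M \<Longrightarrow> e \<notin> M \<Longrightarrow> perfect_matching V (E - {e}) M"
  by (auto simp: perfect_matching_def)

lemma alt_transfer:
  "alt_cycle F M cs \<Longrightarrow> (\<And>i. i < length cs \<Longrightarrow> cyc_edge cs i \<in> F') \<Longrightarrow> alt_cycle F' M cs"
  by (simp add: alt_cycle_def is_cycle_def)

lemma cyc_in: "i < length cs \<Longrightarrow> cyc_edge cs i \<in> cycle_edges cs"
  by (auto simp: cycle_edges_def)

lemma alt_edges: "alt_cycle F M cs \<Longrightarrow> i < length cs \<Longrightarrow> cyc_edge cs i \<in> F"
  by (simp add: alt_cycle_def is_cycle_def)

lemma part3_bwd:
  assumes sg: "simple_graph V E" and cV: "card V = 2 * n" and n2: "n \<ge> 2"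
    and pm: "perfect_matching V E M" and ex: "exactprop E M"
  shows "minimal_graph n V E"
proof -
  have cardpm: "card M' = n" if "perfect_matching V F M'" "simple_graph V F" for F M'
    using pm_card[OF that(2,1)] cV by simp
  have pp: "pairprop E M" using ex unfolding exactprop_def pairprop_def by blast
  have fM: "forcing_number V E M = n - 1" using part1[OF sg cV n2 pm] pp by simp
  have "max_forcing_number V E \<le> n - 1"
    using maxF_le[OF sg pm] fn_le_n1[OF sg _ cardpm] sg n2 by auto
  moreover have "n - 1 \<le> max_forcing_number V E" using maxF_ge[OF sg pm] fM by simp
  ultimately have mx: "max_forcing_number V E = n - 1" by simp
  have up: "card E \<le> n * n" using count_upper[OF sg pm cardpm[OF pm sg] ex] .
  have finE: "finite E" using finite_E[OF sg] .
  have "max_forcing_number V (E - {e}) \<le> n - 2" if e: "e \<in> E" and pm': "perfect_matching V (E - {e}) M'" for e M'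
  proof (rule maxF_le[OF sg_del[OF sg] pm'])
    fix M'' assume pm'': "perfect_matching V (E - {e}) M''"
    have sg': "simple_graph V (E - {e})" using sg_del[OF sg] .
    have c'': "card M'' = n" using cardpm[OF pm'' sg'] .
    have le: "forcing_number V (E - {e}) M'' \<le> n - 1" using fn_le_n1[OF sg' pm'' c''] n2 by simp
    have "forcing_number V (E - {e}) M'' \<noteq> n - 1"
    proof
      assume "forcing_number V (E - {e}) M'' = n - 1"
      then have "pairprop (E - {e}) M''" using part1[OF sg' cV n2 pm''] by simp
      then have "n * n \<le> card (E - {e})" using count_lower[OF sg' pm'' c''] by simp
      moreover have "card (E - {e}) = card E - 1" using e finE by simp
      moreover have "card E \<ge> 1" using e finE by (metis One_nat_def Suc_leI card_gt_0_iff empty_iff)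
      ultimately show False using up by linarith
    qed
    then show "forcing_number V (E - {e}) M'' \<le> n - 2" using le by linarith
  qed
  then show ?thesis unfolding minimal_graph_def using mx by blast
qed

lemma part3_fwd:
  assumes sg: "simple_graph V E" and cV: "card V = 2 * n" and n2: "n \<ge> 2"
    and pm0: "perfect_matching V E M1" and mg: "minimal_graph n V E"
  shows "\<exists>M. perfect_matching V E M \<and> exactprop E M"
proof -
  have mx: "max_forcing_number V E = n - 1"
    and del: "\<And>e. e \<in> E \<Longrightarrow> \<not> (\<exists>M. perfect_matching V (E - {e}) M) \<or> max_forcing_number V (E - {e}) \<le> n - 2"
    using mg unfolding minimal_graph_def by blast+
  obtain M where pm: "perfect_matching V E M" and fM: "forcing_number V E M = n - 1"
    using maxF_attained[OF sg pm0] mx by metis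
  have pp: "pairprop E M" using part1[OF sg cV n2 pm] fM by simp
  have "exactprop E M" unfolding exactprop_def
  proof (intro ballI impI)
    fix ei ej assume ei: "ei \<in> M" and ej: "ej \<in> M" and ne: "ei \<noteq> ej"
    obtain cs where cs: "alt_cycle (induced E (Vs {ei, ej})) M cs" using pp ei ej ne unfolding pairprop_def by blast
    obtain p q r s where PP: "distinct [p,q,r,s] \<and> ei \<union> ej = {p,q,r,s} \<and> {ei,ej} = {{p,q},{r,s}}
     \<and> {p,q} \<in> M \<and> {r,s} \<in> M \<and> {q,r} \<in> E \<and> {s,p} \<in> E \<and> {q,r} \<notin> M \<and> {s,p} \<notin> M
     \<and> cycle_edges cs = {{p,q},{q,r},{r,s},{s,p}} \<and> length cs = 4"
      using alt4_structure[OF sg pm ei ej ne cs] by (elim exE) (erule that)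
    have l4: "length cs = 4" using PP by (elim conjE)
    have C: "cycle_edges cs = {{p,q},{q,r},{r,s},{s,p}}" using PP by (elim conjE)
    have EE: "{ei,ej} = {{p,q},{r,s}}" using PP by (elim conjE)
    have i1: "ei \<in> {{p,q},{r,s}}" using EE by (metis insertI1)
    have i2: "ej \<in> {{p,q},{r,s}}" using EE by (metis insertI1 insertI2)
    have sC: "{{p,q},{r,s}} \<subseteq> cycle_edges cs" unfolding C by blast
    have eiC: "ei \<in> cycle_edges cs" "ej \<in> cycle_edges cs" using subsetD[OF sC i1] subsetD[OF sC i2] .
    have sub1: "cycle_edges cs \<subseteq> induced E (Vs {ei, ej})"
    proof
      fix g assume "g \<in> cycle_edges cs"
      then obtain i where "i < length cs" "g = cyc_edge cs i" by (auto simp: cycle_edges_def)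
      then show "g \<in> induced E (Vs {ei, ej})" using alt_edges[OF cs] by simp
    qed
    have sub2: "induced E (Vs {ei, ej}) \<subseteq> cycle_edges cs"
    proof (rule ccontr)
      assume "\<not> induced E (Vs {ei, ej}) \<subseteq> cycle_edges cs"
      then obtain g where g: "g \<in> induced E (Vs {ei, ej})" "g \<notin> cycle_edges cs" by blast
      have gE: "g \<in> E" and gT: "g \<subseteq> ei \<union> ej" using g(1) by (auto simp: induced_def Vs2)
      have gM: "g \<notin> M"
      proof
        assume gM: "g \<in> M"
        obtain x where x: "x \<in> g" using pm_edge(3)[OF sg pm gM] by (auto simp: card_2_iff)
        then have "x \<in> ei \<or> x \<in> ej" using gT by blast
        then have "g = ei \<or> g = ej" using pm_uniq[OF sg pm] gM ei ej x by blast
        then show False using g(2) eiC by blast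
      qed
      have sg': "simple_graph V (E - {g})" using sg_del[OF sg] .
      have pm': "perfect_matching V (E - {g}) M" using pm_del2[OF pm gM] .
      have pp': "pairprop (E - {g}) M" unfolding pairprop_def
      proof (intro ballI impI)
        fix ek el assume ek: "ek \<in> M" and el: "el \<in> M" and ne2: "ek \<noteq> el"
        show "\<exists>cs. alt_cycle (induced (E - {g}) (Vs {ek, el})) M cs"
        proof (cases "{ek,el} = {ei,ej}")
          case True
          have "alt_cycle (induced (E - {g}) (Vs {ek, el})) M cs"
          proof (rule alt_transfer[OF cs])
            fix i assume i: "i < length cs"
            have "cyc_edge cs i \<in> induced E (Vs {ei, ej})" using alt_edges[OF cs i] .
            moreover have "cyc_edge cs i \<noteq> g" using cyc_in[OF i] g(2) by auto
            ultimately show "cyc_edge cs i \<in> induced (E - {g}) (Vs {ek, el})" using True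
              by (simp add: induced_def)
          qed
          then show ?thesis by blast
        next
          case False
          obtain cs' where cs': "alt_cycle (induced E (Vs {ek, el})) M cs'" using pp ek el ne2 unfolding pairprop_def by blast
          have gn: "\<not> g \<subseteq> ek \<union> el"
          proof
            assume "g \<subseteq> ek \<union> el"
            then have "{ei,ej} = {ek,el}" using edge_pair_unique[OF sg pm gE gM ei ej ek el ne ne2 gT] by blast
            then show False using False by simp
          qed
          have "alt_cycle (induced (E - {g}) (Vs {ek, el})) M cs'"
          proof (rule alt_transfer[OF cs'])
            fix i assume i: "i < length cs'"
            have ci: "cyc_edge cs' i \<in> induced E (Vs {ek, el})" using alt_edges[OF cs' i] .
            then have "cyc_edge cs' i \<noteq> g" using gn by (auto simp: induced_def Vs2)
            then show "cyc_edge cs' i \<in> induced (E - {g}) (Vs {ek, el})" using ci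
              by (simp add: induced_def)
          qed
          then show ?thesis by blast
        qed
      qed
      have "forcing_number V (E - {g}) M = n - 1" using part1[OF sg' cV n2 pm'] pp' by simp
      then have "n - 1 \<le> max_forcing_number V (E - {g})" using maxF_ge[OF sg' pm'] by simp
      moreover have "max_forcing_number V (E - {g}) \<le> n - 2" using del[OF gE] pm' by blast
      ultimately show False using n2 by linarith
    qed
    have "induced E (Vs {ei, ej}) = cycle_edges cs" using equalityI[OF sub2 sub1] .
    then show "\<exists>cs. alt_cycle (induced E (Vs {ei, ej})) M cs \<and> length cs = 4 \<and> induced E (Vs {ei, ej}) = cycle_edges cs"
      using cs l4 by blast
  qed
  then show ?thesis using pm by blast
qed

theorem lemma2p2:
  fixes V :: "'a set" and E :: "'a set set" and n :: nat
  assumes "n \<ge> 2" and "in_G2n n V E"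
  shows "(\<forall>M. perfect_matching V E M \<longrightarrow>
            (forcing_number V E M = n - 1 \<longleftrightarrow>
             (\<forall>ei\<in>M. \<forall>ej\<in>M. ei \<noteq> ej \<longrightarrow>
                (\<exists>cs. alt_cycle (induced E (Vs {ei, ej})) M cs))))
       \<and> ((\<exists>M. perfect_matching V E M \<and> forcing_number V E M = n - 1) \<longleftrightarrow>
          (\<exists>M. perfect_matching V E M \<and>
             (\<forall>ei\<in>M. \<forall>ej\<in>M. ei \<noteq> ej \<longrightarrow>
                (\<exists>cs. alt_cycle (induced E (Vs {ei, ej})) M cs))))
       \<and> (minimal_graph n V E \<longleftrightarrow>
          (\<exists>M. perfect_matching V E M \<and>
             (\<forall>ei\<in>M. \<forall>ej\<in>M. ei \<noteq> ej \<longrightarrow>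
                (\<exists>cs. alt_cycle (induced E (Vs {ei, ej})) M cs \<and> length cs = 4 \<and>
                      induced E (Vs {ei, ej}) = cycle_edges cs))))"
proof -
  have sg: "simple_graph V E" and cV: "card V = 2 * n" and ex: "\<exists>M. perfect_matching V E M"
    using assms(2) unfolding in_G2n_def by blast+
  obtain M0 where pm0: "perfect_matching V E M0" using ex by blast
  have P1: "\<forall>M. perfect_matching V E M \<longrightarrow> (forcing_number V E M = n - 1 \<longleftrightarrow> pairprop E M)"
  proof (intro allI impI)
    fix M assume "perfect_matching V E M"
    then show "forcing_number V E M = n - 1 \<longleftrightarrow> pairprop E M" using part1[OF sg cV assms(1)] by blast
  qed
  have P2: "(\<exists>M. perfect_matching V E M \<and> forcing_number V E M = n - 1) \<longleftrightarrow>
            (\<exists>M. perfect_matching V E M \<and> pairprop E M)" using P1 by blast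
  have P3: "minimal_graph n V E \<longleftrightarrow> (\<exists>M. perfect_matching V E M \<and> exactprop E M)"
  proof
    assume "minimal_graph n V E"
    then show "\<exists>M. perfect_matching V E M \<and> exactprop E M" using part3_fwd[OF sg cV assms(1) pm0] by blast
  next
    assume "\<exists>M. perfect_matching V E M \<and> exactprop E M"
    then obtain M where "perfect_matching V E M" "exactprop E M" by blast
    then show "minimal_graph n V E" using part3_bwd[OF sg cV assms(1)] by blast
  qed
  note C1 = P1[unfolded pairprop_def]
  note C2 = P2[unfolded pairprop_def]
  note C3 = P3[unfolded exactprop_def]
  show ?thesis using C1 C2 C3 by (intro conjI) assumption+
qed

end
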